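(* Let $d\ge1$. For all $p,q\in\mathcal P_d$, if $\mathcal A(p)=\mathcal A(q)$ then $q=cp$ for some $c\in\mathbb C$ with $|c|=1$; that is, $\mathcal A(p)$ determines the equivalence class $[p]=\{cp:|c|=1\}$.
   Context: $\mathcal P_d$ is the space of complex polynomials of degree at most $d-1$ on the unit circle. Let $\omega=e^{2\pi i/(2d-1)}$, $\nu=e^{2\pi i/d}$. The map $\mathcal A:\mathcal P_d\to\mathbb R^{6d-3}$ is $(\mathcal A(p))_j=|p(\omega^j)|^2$ for $1\le j\le 2d-1$, $|p(\omega^j)-p(\omega^j\nu)|^2$ for $2d\le j\le4d-2$, and $|p(\omega^j)-ip(\omega^j\nu)|^2$ for $4d-1\le j\le 6d-3$. *)

theory Defs
  imports "HOL-Analysis.Analysis" "HOL-Computational_Algebra.Polynomial"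
begin

definition omega :: "nat \<Rightarrow> complex" where
  "omega d = cis (2 * pi / real (2 * d - 1))"

definition nu :: "nat \<Rightarrow> complex" where
  "nu d = cis (2 * pi / real d)"

definition Pd :: "nat \<Rightarrow> complex poly set" where
  "Pd d = {p. degree p \<le> d - 1}"

definition Ameas :: "nat \<Rightarrow> complex poly \<Rightarrow> nat \<Rightarrow> real" where
  "Ameas d p j =
     (if 1 \<le> j \<and> j \<le> 2*d - 1 then (cmod (poly p (omega d ^ j)))\<^sup>2
      else if 2*d \<le> j \<and> j \<le> 4*d - 2 then
        (cmod (poly p (omega d ^ j) - poly p (omega d ^ j * nu d)))\<^sup>2
      else if 4*d - 1 \<le> j \<and> j \<le> 6*d - 3 then
        (cmod (poly p (omega d ^ j) - \<i> * poly p (omega d ^ j * nu d)))\<^sup>2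
      else 0)"

end

theory Submission
  imports Defs "HOL-Computational_Algebra.Polynomial_Factorial" "HOL-Computational_Algebra.Field_as_Ring"
begin


lemma cis_pow_ne1:
  fixes N k :: nat
  assumes "0 < k" "k < N"
  shows "cis (2*pi / real N) ^ k \<noteq> 1"
proof
  assume "cis (2*pi / real N) ^ k = 1"
  hence "cis (real k * (2*pi / real N)) = 1" by (metis Complex.DeMoivre)
  hence "cos (real k * (2*pi / real N)) = 1" by (metis cis.sel(1) one_complex.sel(1))
  then obtain m :: int where m: "real k * (2*pi / real N) = m * 2 * pi" by (auto simp: cos_one_2pi_int)
  have "real k = m * real N" using m assms by (simp add: field_simps)
  hence "int k = m * int N" by (metis of_int_eq_iff of_int_mult of_int_of_nat_eq)
  moreover have "m \<ge> 1 \<or> m \<le> 0" by linarith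
  ultimately show False using assms
    by (smt (verit) mult_le_0_iff mult_le_cancel_right1 of_nat_0_less_iff of_nat_less_iff)
qed

lemma cis_pow_inj:
  fixes N :: nat
  assumes "a < N" "b < N" "cis (2*pi / real N) ^ a = cis (2*pi / real N) ^ b"
  shows "a = b"
proof (rule ccontr)
  let ?w = "cis (2*pi / real N)"
  assume ne: "a \<noteq> b"
  { fix a b :: nat assume "a < b" "b < N" "?w ^ a = ?w ^ b"
    moreover have "?w ^ b = ?w ^ a * ?w ^ (b - a)" using \<open>a<b\<close> by (simp add: power_add[symmetric])
    ultimately have "?w ^ a * ?w ^ (b - a) = ?w ^ a * 1" by simp
    hence "?w ^ (b-a) = 1" by (simp add: cis_neq_zero)
    moreover have "0 < b - a" "b - a < N" using \<open>a<b\<close> \<open>b<N\<close> by auto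
    ultimately have False using cis_pow_ne1[of "b-a" N] by blast }
  with ne assms show False by (metis linorder_neqE_nat)
qed

lemma norm_cis_pow[simp]: "cmod (cis x ^ k) = 1" by (simp add: norm_power)


definition Rf :: "nat \<Rightarrow> complex \<Rightarrow> complex poly \<Rightarrow> complex poly" where
  "Rf d t p = (\<Sum>k<d. monom (cnj (coeff p k) * t^k) (d-1-k))"

lemma poly_Rf: "poly (Rf d t p) z = (\<Sum>k<d. cnj (coeff p k) * t^k * z^(d-1-k))"
  by (simp add: Rf_def poly_sum poly_monom)

lemma degree_Rf: "degree (Rf d t p) \<le> d - 1"
  unfolding Rf_def by (rule degree_sum_le) (auto intro: order.trans[OF degree_monom_le])

lemma poly_lt: fixes p :: "complex poly" assumes "degree p < d" shows "poly p z = (\<Sum>k<d. coeff p k * z^k)"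
proof -
  have "(\<Sum>k<d. coeff p k * z^k) = (\<Sum>k\<le>degree p. coeff p k * z^k)"
    by (rule sum.mono_neutral_right) (use assms in \<open>auto simp: coeff_eq_0\<close>)
  thus ?thesis using poly_altdef[of p z] by simp
qed

lemma unit_cnj: "cmod z = 1 \<Longrightarrow> z * cnj z = 1"
  by (metis complex_norm_square of_real_1 power_one)

lemma pow_split: fixes z :: complex assumes "cmod z = 1" "k < d"
  shows "z^(d-1) * cnj z ^ k = z^(d-1-k)"
proof -
  have "z^(d-1) = z^(d-1-k) * z^k" using assms by (simp add: power_add[symmetric])
  hence "z^(d-1) * cnj z ^ k = z^(d-1-k) * (z * cnj z)^k" by (simp add: power_mult_distrib)
  thus ?thesis using unit_cnj[OF assms(1)] by simp
qed

lemma Rf_circ: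
  assumes "cmod z = 1" "cmod t = 1" "degree p < d"
  shows "poly (Rf d (cnj t) p) z = z^(d-1) * cnj (poly p (t*z))"
proof -
  have "z^(d-1) * cnj (poly p (t*z)) = (\<Sum>k<d. cnj (coeff p k) * cnj t^k * (z^(d-1) * cnj z ^ k))"
    by (simp add: poly_lt[OF assms(3)] sum_distrib_left power_mult_distrib mult_ac)
  also have "\<dots> = (\<Sum>k<d. cnj (coeff p k) * cnj t^k * z^(d-1-k))"
    by (rule sum.cong) (use pow_split[OF assms(1)] in auto)
  finally show ?thesis by (simp add: poly_Rf)
qed

lemma Rf_scale:
  assumes "cmod t = 1"
  shows "poly (Rf d 1 p) (t*z) = t^(d-1) * poly (Rf d (cnj t) p) z"
proof -
  have "t^(d-1) * poly (Rf d (cnj t) p) z = (\<Sum>k<d. cnj (coeff p k) * (t^(d-1) * cnj t^k) * z^(d-1-k))"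
    by (simp add: poly_Rf sum_distrib_left mult_ac)
  also have "\<dots> = (\<Sum>k<d. cnj (coeff p k) * (t*z)^(d-1-k))"
    by (rule sum.cong) (use pow_split[OF assms(1)] in \<open>auto simp: power_mult_distrib\<close>)
  finally show ?thesis by (simp add: poly_Rf)
qed


lemma sc_ne0: fixes f :: "complex poly" assumes "v \<noteq> 0" "f \<noteq> 0" shows "pcompose f [:0,v:] \<noteq> 0"
  using assms by (simp add: pcompose_eq_0_iff)

lemma sc_deg: fixes f :: "complex poly" assumes "v \<noteq> 0" shows "degree (pcompose f [:0,v:]) = degree f"
  using assms by (simp add: degree_pcompose)

lemma eigen:
  fixes x y :: "complex poly"
  assumes "v \<noteq> 0" "x \<noteq> 0" "coprime x y" "pcompose x [:0,v:] * y = x * pcompose y [:0,v:]"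
  shows "\<exists>l. pcompose x [:0,v:] = smult l x"
proof -
  have "x dvd pcompose x [:0,v:] * y" using assms(4) by (metis dvd_triv_left)
  hence "x dvd pcompose x [:0,v:]" using assms(3) by (simp add: coprime_dvd_mult_left_iff)
  then obtain k where k: "pcompose x [:0,v:] = x * k" by (auto elim: dvdE)
  have "k \<noteq> 0" using k sc_ne0[OF assms(1,2)] by auto
  hence "degree (pcompose x [:0,v:]) = degree x + degree k" using k assms(2) by (simp add: degree_mult_eq)
  hence "degree k = 0" using sc_deg[OF assms(1)] by simp
  hence "k = [:coeff k 0:]" by (metis degree_0_id)
  hence "pcompose x [:0,v:] = smult (coeff k 0) x" using k by (metis mult.commute mult.right_neutral mult_smult_left smult_one)
  thus ?thesis by blast
qed

lemma scal:
  fixes p q :: "complex poly"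
  assumes "p \<noteq> 0" "q \<noteq> 0" "degree p < d" "degree q < d"
    and eq: "pcompose p [:0,v:] * q = p * pcompose q [:0,v:]" and v: "v = cis (2*pi/real d)"
  shows "\<exists>c. q = smult c p"
proof -
  have v0: "v \<noteq> 0" using v by (simp add: cis_neq_zero)
  define g where "g = gcd p q"
  have g0: "g \<noteq> 0" using assms(1) by (simp add: g_def)
  obtain b e where b: "p = b * g" and e: "q = e * g" and cop: "coprime b e"
    using gcd_coprime_exists[of p q] g0 unfolding g_def by blast
  have b0: "b \<noteq> 0" and e0: "e \<noteq> 0" using b e assms(1,2) by auto
  have sg0: "pcompose g [:0,v:] \<noteq> 0" using sc_ne0[OF v0 g0] .
  have "(pcompose b [:0,v:] * e) * (g * pcompose g [:0,v:]) = (b * pcompose e [:0,v:]) * (g * pcompose g [:0,v:])"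
    using eq unfolding b e by (simp add: pcompose_mult mult_ac)
  hence be: "pcompose b [:0,v:] * e = b * pcompose e [:0,v:]" using g0 sg0 by simp
  obtain l where l: "pcompose b [:0,v:] = smult l b" using eigen[OF v0 b0 cop be] by blast
  obtain m where m: "pcompose e [:0,v:] = smult m e"
    using eigen[OF v0 e0 _ ] cop be by (metis coprime_commute mult.commute)
  have "smult l (b * e) = smult m (b * e)" using be l m by simp
  hence "smult (l - m) (b * e) = 0" by (simp add: smult_diff_left)
  hence lm: "l = m" using b0 e0 by simp
  have cb: "v^i * coeff b i = l * coeff b i" for i using arg_cong[OF l, of "\<lambda>f. coeff f i"]
    by (simp add: coeff_pcompose_linear)
  have ce: "v^i * coeff e i = l * coeff e i" for i using arg_cong[OF m, of "\<lambda>f. coeff f i"] lm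
    by (simp add: coeff_pcompose_linear)
  have "coeff b 0 \<noteq> 0 \<or> coeff e 0 \<noteq> 0"
  proof (rule ccontr)
    assume "\<not> ?thesis"
    hence "[:0,1:] dvd b" "[:0,1:] dvd e" by (simp_all add: dvd_iff_poly_eq_0 poly_0_coeff_0)
    hence "is_unit [:0::complex,1:]" using cop by (metis coprime_common_divisor)
    thus False by (simp add: is_unit_iff_degree)
  qed
  hence l1: "l = 1" using cb[of 0] ce[of 0] by auto
  have db: "degree b < d" using b g0 b0 assms(3) by (simp add: degree_mult_eq)
  have de: "degree e < d" using e g0 e0 assms(4) by (simp add: degree_mult_eq)
  have "degree b = 0"
  proof (rule ccontr)
    assume "degree b \<noteq> 0"
    moreover have "v ^ degree b = 1" using cb[of "degree b"] l1 b0 by simp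
    ultimately show False using cis_pow_ne1[of "degree b" d] db v by simp
  qed
  hence bb: "b = [:coeff b 0:]" by (metis degree_0_id)
  have "degree e = 0"
  proof (rule ccontr)
    assume "degree e \<noteq> 0"
    moreover have "v ^ degree e = 1" using ce[of "degree e"] l1 e0 by simp
    ultimately show False using cis_pow_ne1[of "degree e" d] de v by simp
  qed
  hence ee: "e = [:coeff e 0:]" by (metis degree_0_id)
  have "coeff b 0 \<noteq> 0" using b0 bb by (metis pCons_0_0)
  have "q = smult (coeff e 0 / coeff b 0) p"
    using \<open>coeff b 0 \<noteq> 0\<close> by (subst e, subst b, subst ee, subst bb) simp
  thus ?thesis by blast
qed

lemma step5:
  fixes p q B D :: "complex poly"
  assumes v0: "v \<noteq> 0" and E1: "p * B = q * D"
    and E2: "p * pcompose B [:0,v:] = q * pcompose D [:0,v:]" and B0: "B \<noteq> 0"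
  shows "pcompose p [:0,v:] * q = p * pcompose q [:0,v:]"
proof -
  have E1': "pcompose p [:0,v:] * pcompose B [:0,v:] = pcompose q [:0,v:] * pcompose D [:0,v:]"
    using arg_cong[OF E1, of "\<lambda>f. pcompose f [:0,v:]"] by (simp add: pcompose_mult)
  have "pcompose B [:0,v:] * (pcompose p [:0,v:] * q - p * pcompose q [:0,v:])
     = (pcompose p [:0,v:] * pcompose B [:0,v:]) * q - (p * pcompose B [:0,v:]) * pcompose q [:0,v:]"
    by (simp add: algebra_simps)
  also have "\<dots> = 0" unfolding E1' E2 by (simp add: algebra_simps)
  finally show ?thesis using sc_ne0[OF v0 B0] by simp
qed


lemma X_eq:
  fixes u v x y :: complex
  assumes h1: "u * cnj u = x * cnj x" and h2: "v * cnj v = y * cnj y"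
    and h3: "(u-v) * cnj (u-v) = (x-y) * cnj (x-y)"
    and h4: "(u - \<i> * v) * cnj (u - \<i> * v) = (x - \<i> * y) * cnj (x - \<i> * y)"
  shows "u * cnj v = x * cnj y"
proof -
  have e3: "u * cnj v + v * cnj u = x * cnj y + y * cnj x"
    using h1 h2 h3 by (simp add: algebra_simps)
  have "\<i> * (u * cnj v - v * cnj u) = \<i> * (x * cnj y - y * cnj x)"
    using h1 h2 h4 by (simp add: algebra_simps)
  hence e4: "u * cnj v - v * cnj u = x * cnj y - y * cnj x" by simp
  have "(u * cnj v + v * cnj u) + (u * cnj v - v * cnj u) = (x * cnj y + y * cnj x) + (x * cnj y - y * cnj x)"
    using e3 e4 by simp
  hence "2 * (u * cnj v) = 2 * (x * cnj y)" by (simp add: algebra_simps)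
  thus ?thesis by simp
qed

lemma sq_c: "(cmod a)^2 = (cmod b)^2 \<Longrightarrow> a * cnj a = b * cnj b"
  by (metis complex_norm_square)

lemma omega_unit: "cmod (omega d ^ j) = 1" by (simp add: omega_def)

lemma omega_pow_n: assumes "d \<ge> 1" shows "omega d ^ (2*d-1) = 1"
proof -
  have "omega d ^ (2*d-1) = cis (real (2*d-1) * (2*pi / real (2*d-1)))"
    unfolding omega_def by (metis Complex.DeMoivre)
  also have "\<dots> = cis (2*pi)" using assms by simp
  finally show ?thesis by simp
qed

lemma omega_inj: assumes "d \<ge> 1" shows "inj_on (\<lambda>j. omega d ^ j) {1..2*d-1}"
proof (rule inj_onI)
  fix a b assume ab: "a \<in> {1..2*d-1}" "b \<in> {1..2*d-1}" "omega d ^ a = omega d ^ b"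
  have w0: "omega d \<noteq> 0" by (simp add: omega_def cis_neq_zero)
  have "omega d ^ a = omega d * omega d ^ (a-1)" "omega d ^ b = omega d * omega d ^ (b-1)"
    using ab(1,2) by (simp_all add: power_Suc[symmetric])
  hence "omega d ^ (a-1) = omega d ^ (b-1)" using ab(3) w0 by simp
  hence "a - 1 = b - 1"
    using cis_pow_inj[of "a-1" "2*d-1" "b-1"] ab(1,2) unfolding omega_def by fastforce
  thus "a = b" using ab(1,2) by (simp add: le_diff_conv) arith
qed

lemma L0:
  fixes P :: "complex poly"
  assumes "d \<ge> 1" "degree P < 2*d-1" "\<forall>j\<in>{1..2*d-1}. poly P (omega d ^ j) = 0"
  shows "P = 0"
proof (rule poly_eqI_degree[where A = "(\<lambda>j. omega d ^ j) ` {1..2*d-1}"])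
  show "card ((\<lambda>j. omega d ^ j) ` {1..2*d-1}) > degree P"
    using card_image[OF omega_inj[OF assms(1)]] assms(2) by simp
  show "card ((\<lambda>j. omega d ^ j) ` {1..2*d-1}) > degree (0::complex poly)"
    using card_image[OF omega_inj[OF assms(1)]] assms(1) by simp
qed (use assms in auto)


theorem mainTheorem6:
  fixes d :: nat and p q :: "complex poly"
  assumes "d \<ge> 1"
    and "p \<in> Pd d" and "q \<in> Pd d"
    and "\<forall>j \<in> {1..6*d-3}. Ameas d p j = Ameas d q j"
  shows "\<exists>c::complex. cmod c = 1 \<and> q = smult c p"
proof -
  define n where "n = 2*d-1"
  define w where "w = omega d"
  define v where "v = nu d"
  have d1: "d \<ge> 1" using assms(1) .
  have H: "\<And>j. j \<in> {1..6*d-3} \<Longrightarrow> Ameas d p j = Ameas d q j" using assms(4) by blast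
  have dp: "degree p < d" and dq: "degree q < d" using assms(2,3) d1 by (auto simp: Pd_def)
  have wu: "\<And>j. cmod (w^j) = 1" unfolding w_def by (rule omega_unit)
  have vu: "cmod v = 1" by (simp add: v_def nu_def)
  have v0: "v \<noteq> 0" using vu by auto
  have wn: "\<And>j. w^(j+n) = w^j" "\<And>j. w^(j+2*n) = w^j"
  proof -
    have wn1: "w^n = 1" using omega_pow_n[OF d1] unfolding w_def n_def .
    show "w^(j+n) = w^j" for j by (simp add: power_add wn1)
    show "w^(j+2*n) = w^j" for j by (simp add: power_add wn1 mult_2)
  qed
  have L0': "\<And>P::complex poly. degree P < n \<Longrightarrow> (\<And>j. j \<in> {1..n} \<Longrightarrow> poly P (w^j) = 0) \<Longrightarrow> P = 0"
    using L0[OF d1] unfolding n_def w_def by blast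
  have B1: "p' * cnj p' = q' * cnj q'" if "j \<in> {1..n}" "p' = poly p (w^j)" "q' = poly q (w^j)" for j p' q'
  proof -
    have "j \<in> {1..6*d-3}" using that(1) unfolding n_def by auto
    from H[OF this] that have "(cmod p')^2 = (cmod q')^2" unfolding Ameas_def n_def w_def by simp
    thus ?thesis by (rule sq_c)
  qed
  let ?R = "\<lambda>f. Rf d 1 f"
  have Rcirc1: "poly (?R f) z = z^(d-1) * cnj (poly f z)" if "cmod z = 1" "degree f < d" for f z
    using Rf_circ[OF that(1) _ that(2), of 1] by simp
  have degpR: "degree (f * ?R f) < n" if "degree f < d" for f
  proof -
    have "degree (f * ?R f) \<le> degree f + degree (?R f)" by (rule degree_mult_le)
    also have "\<dots> \<le> (d-1) + (d-1)" using that degree_Rf[of d 1 f] by simp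
    finally show ?thesis unfolding n_def using d1 by simp
  qed
  have E1: "p * ?R p = q * ?R q"
  proof -
    have "p * ?R p - q * ?R q = 0"
    proof (rule L0')
      show "degree (p * ?R p - q * ?R q) < n"
        using degpR[OF dp] degpR[OF dq] degree_diff_le_max[of "p * ?R p" "q * ?R q"] by simp
      fix j assume j: "j \<in> {1..n}"
      show "poly (p * ?R p - q * ?R q) (w^j) = 0"
        using B1[OF j refl refl] Rcirc1[OF wu dp, of j] Rcirc1[OF wu dq, of j]
        by (simp add: algebra_simps)
    qed
    thus ?thesis by simp
  qed
  have circ: "poly p z * cnj (poly p z) = poly q z * cnj (poly q z)" if "cmod z = 1" for z
  proof -
    have "poly (p * ?R p) z = poly (q * ?R q) z" using E1 by simp
    hence "z^(d-1) * (poly p z * cnj (poly p z)) = z^(d-1) * (poly q z * cnj (poly q z))"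
      using Rcirc1[OF that dp] Rcirc1[OF that dq] by (simp add: algebra_simps)
    moreover have "z \<noteq> 0" using that by auto
    ultimately show ?thesis by simp
  qed
  have X: "poly p (w^j) * cnj (poly p (v * w^j)) = poly q (w^j) * cnj (poly q (v * w^j))" if j: "j \<in> {1..n}" for j
  proof (rule X_eq)
    show "poly p (w^j) * cnj (poly p (w^j)) = poly q (w^j) * cnj (poly q (w^j))" using B1[OF j refl refl] .
    show "poly p (v * w^j) * cnj (poly p (v * w^j)) = poly q (v * w^j) * cnj (poly q (v * w^j))"
      by (rule circ) (simp add: norm_mult vu wu)
    have j2: "j + n \<in> {1..6*d-3}" "\<not> (1 \<le> j + n \<and> j + n \<le> 2*d-1)" "2*d \<le> j+n \<and> j+n \<le> 4*d-2"
      using j unfolding n_def by auto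
    from H[OF j2(1)] have "(cmod (poly p (w^(j+n)) - poly p (w^(j+n) * v)))^2 = (cmod (poly q (w^(j+n)) - poly q (w^(j+n) * v)))^2"
      unfolding Ameas_def w_def v_def if_not_P[OF j2(2)] if_P[OF j2(3)] .
    thus "(poly p (w^j) - poly p (v * w^j)) * cnj (poly p (w^j) - poly p (v * w^j)) = (poly q (w^j) - poly q (v * w^j)) * cnj (poly q (w^j) - poly q (v * w^j))"
      unfolding wn by (intro sq_c) (simp add: mult.commute)
    have j3: "j + 2*n \<in> {1..6*d-3}" "\<not> (1 \<le> j + 2*n \<and> j + 2*n \<le> 2*d-1)" "\<not> (2*d \<le> j+2*n \<and> j+2*n \<le> 4*d-2)"
       "4*d-1 \<le> j+2*n \<and> j+2*n \<le> 6*d-3"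
      using j unfolding n_def by auto
    from H[OF j3(1)] have "(cmod (poly p (w^(j+2*n)) - \<i> * poly p (w^(j+2*n) * v)))^2 = (cmod (poly q (w^(j+2*n)) - \<i> * poly q (w^(j+2*n) * v)))^2"
      unfolding Ameas_def w_def v_def if_not_P[OF j3(2)] if_not_P[OF j3(3)] if_P[OF j3(4)] .
    thus "(poly p (w^j) - \<i> * poly p (v * w^j)) * cnj (poly p (w^j) - \<i> * poly p (v * w^j)) = (poly q (w^j) - \<i> * poly q (v * w^j)) * cnj (poly q (w^j) - \<i> * poly q (v * w^j))"
      unfolding wn by (intro sq_c) (simp add: mult.commute)
  qed
  let ?Q = "\<lambda>f. Rf d (cnj v) f"
  have Qcirc: "poly (?Q f) z = z^(d-1) * cnj (poly f (v * z))" if "cmod z = 1" "degree f < d" for f z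
    using Rf_circ[OF that(1) vu that(2)] .
  have degpQ: "degree (f * ?Q f) < n" if "degree f < d" for f
  proof -
    have "degree (f * ?Q f) \<le> degree f + degree (?Q f)" by (rule degree_mult_le)
    also have "\<dots> \<le> (d-1) + (d-1)" using that degree_Rf[of d "cnj v" f] by simp
    finally show ?thesis unfolding n_def using d1 by simp
  qed
  have E2q: "p * ?Q p = q * ?Q q"
  proof -
    have "p * ?Q p - q * ?Q q = 0"
    proof (rule L0')
      show "degree (p * ?Q p - q * ?Q q) < n"
        using degpQ[OF dp] degpQ[OF dq] degree_diff_le_max[of "p * ?Q p" "q * ?Q q"] by simp
      fix j assume j: "j \<in> {1..n}"
      show "poly (p * ?Q p - q * ?Q q) (w^j) = 0"
        using X[OF j] Qcirc[OF wu dp, of j] Qcirc[OF wu dq, of j]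
        by (simp add: algebra_simps)
    qed
    thus ?thesis by simp
  qed
  have E2: "p * pcompose (?R p) [:0,v:] = q * pcompose (?R q) [:0,v:]"
  proof (rule poly_ext)
    fix z
    have "poly (p * ?Q p) z = poly (q * ?Q q) z" using E2q by simp
    thus "poly (p * pcompose (?R p) [:0,v:]) z = poly (q * pcompose (?R q) [:0,v:]) z"
      using Rf_scale[OF vu, of d p z] Rf_scale[OF vu, of d q z]
      by (simp add: poly_pcompose mult.commute mult.left_commute)
  qed
  show ?thesis
  proof (cases "p = 0")
    case True
    have "q = 0"
    proof (rule L0')
      show "degree q < n" using dq unfolding n_def by simp
      fix j assume j: "j \<in> {1..n}"
      show "poly q (w^j) = 0" using B1[OF j refl refl] True by simp
    qed
    thus ?thesis using True by (intro exI[of _ 1]) simp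
  next
    case pn0: False
    have qn0: "q \<noteq> 0"
    proof
      assume q0: "q = 0"
      have "p = 0"
      proof (rule L0')
        show "degree p < n" using dp unfolding n_def by simp
        fix j assume j: "j \<in> {1..n}"
        show "poly p (w^j) = 0" using B1[OF j refl refl] q0 by simp
      qed
      thus False using pn0 by simp
    qed
    have R0: "?R p \<noteq> 0"
    proof
      assume R0: "?R p = 0"
      have "p = 0"
      proof (rule L0')
        show "degree p < n" using dp unfolding n_def by simp
        fix j assume j: "j \<in> {1..n}"
        have w0: "w \<noteq> 0" using wu[of 1] by (metis norm_zero power_one_right zero_neq_one)
        thus "poly p (w^j) = 0" using Rcirc1[OF wu dp, of j] R0 by simp
      qed
      thus False using pn0 by simp
    qed
    have sc: "pcompose p [:0,v:] * q = p * pcompose q [:0,v:]"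
      by (rule step5[OF v0 E1 E2 R0])
    obtain c where c: "q = smult c p"
      using scal[OF pn0 qn0 dp dq sc] unfolding v_def nu_def by blast
    obtain j where j: "j \<in> {1..n}" "poly p (w^j) \<noteq> 0"
    proof -
      have dn: "degree p < n" using dp unfolding n_def by simp
      have "\<not> (\<forall>j\<in>{1..n}. poly p (w^j) = 0)"
        using L0'[OF dn] pn0 by blast
      thus ?thesis using that by blast
    qed
    have "(c * cnj c) * (poly p (w^j) * cnj (poly p (w^j))) = 1 * (poly p (w^j) * cnj (poly p (w^j)))"
      using B1[OF j(1) refl refl] c by (simp add: algebra_simps)
    hence "c * cnj c = 1" using j(2) by simp
    hence "cmod c = 1" by (metis complex_norm_square norm_ge_zero of_real_eq_1_iff power2_eq_1_iff abs_of_nonneg real_sqrt_abs real_sqrt_one)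
    thus ?thesis using c by blast
  qed
qed

end
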